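(* Let $n\ge 0$ be an integer and $r>0$. Then the function $F(\eta)=\eta^{2}\frac{I_{n+1/2}'(\eta^{-1}r)}{I_{n+1/2}(\eta^{-1}r)}$ is strictly monotonically increasing in $\eta\in(0,\infty)$.
   Context: $I_{n+1/2}$ denotes the modified Bessel function of the first kind of order $n+\tfrac12$. *)

theory Defs
  imports "HOL-Analysis.Analysis"
begin

definition besselI :: "real \<Rightarrow> real \<Rightarrow> real" where
  "besselI \<nu> x = (\<Sum>k. (x / 2) powr (2 * real k + \<nu>) / (fact k * Gamma (real k + \<nu> + 1)))"

end

theory Submission
  imports Defs
begin

definition bq :: "real \<Rightarrow> real \<Rightarrow> real" where
  "bq \<mu> t = (\<Sum>k. t ^ k / (fact k * Gamma (real k + \<mu> + 1)))"

lemma Gamma_rec: assumes "(x::real) > 0" shows "Gamma (x + 1) = x * Gamma x"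
  using assms by (intro Gamma_plus1) (auto elim!: nonpos_Ints_cases)

lemma Gamma_ge: assumes "\<mu> \<ge> 0" shows "Gamma (real k + \<mu> + 1) \<ge> Gamma (\<mu> + 1)"
proof (induction k)
  case 0 then show ?case by simp
next
  case (Suc k)
  have pos: "Gamma (real k + \<mu> + 1) > 0" using assms by (intro Gamma_real_pos) auto
  have "Gamma (real (Suc k) + \<mu> + 1) = (real k + \<mu> + 1) * Gamma (real k + \<mu> + 1)"
    using Gamma_rec[of "real k + \<mu> + 1"] assms by (simp add: algebra_simps)
  also have "\<dots> \<ge> Gamma (real k + \<mu> + 1)" using pos assms
    by (metis le_add_same_cancel2 mult_le_cancel_right1 of_nat_0_le_iff add_nonneg_nonneg order_less_imp_not_less)
  finally show ?case using Suc by linarith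
qed

lemma bq_summable: assumes "\<mu> \<ge> 0"
  shows "summable (\<lambda>k. y ^ k / (fact k * Gamma (real k + \<mu> + 1)))"
proof (rule summable_comparison_test[where g = "\<lambda>k. norm y ^ k / fact k / Gamma (\<mu> + 1)"])
  have g0: "Gamma (\<mu> + 1) > 0" using assms by (intro Gamma_real_pos) auto
  show "\<exists>N. \<forall>n\<ge>N. norm (y ^ n / (fact n * Gamma (real n + \<mu> + 1))) \<le> norm y ^ n / fact n / Gamma (\<mu> + 1)"
  proof (intro exI allI impI)
    fix n :: nat
    have g: "Gamma (real n + \<mu> + 1) \<ge> Gamma (\<mu> + 1)" using Gamma_ge assms by blast
    have "norm (y ^ n / (fact n * Gamma (real n + \<mu> + 1))) = norm y ^ n / fact n / Gamma (real n + \<mu> + 1)"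
      using g g0 by (simp add: norm_divide norm_mult power_abs)
    also have "\<dots> \<le> norm y ^ n / fact n / Gamma (\<mu> + 1)"
      using g g0 by (intro divide_left_mono) auto
    finally show "norm (y ^ n / (fact n * Gamma (real n + \<mu> + 1))) \<le> norm y ^ n / fact n / Gamma (\<mu> + 1)" .
  qed
  show "summable (\<lambda>k. norm y ^ k / fact k / Gamma (\<mu> + 1))"
    using summable_exp[of "norm y"] by (intro summable_divide) (simp add: divide_inverse mult.commute)
qed

lemma bq_deriv: assumes "\<mu> \<ge> 0"
  shows "(bq \<mu> has_real_derivative bq (\<mu> + 1) t) (at t)"
proof -
  have "((\<lambda>x. \<Sum>n. (1 / (fact n * Gamma (real n + \<mu> + 1))) * x^n) has_field_derivative
     (\<Sum>n. diffs (\<lambda>n. 1 / (fact n * Gamma (real n + \<mu> + 1))) n * t^n)) (at t)"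
    by (rule termdiffs_strong_converges_everywhere) (use bq_summable[OF assms] in simp)
  moreover have "(\<lambda>x. \<Sum>n. (1 / (fact n * Gamma (real n + \<mu> + 1))) * x^n) = bq \<mu>"
    by (simp add: bq_def fun_eq_iff)
  moreover have "diffs (\<lambda>n. 1 / (fact n * Gamma (real n + \<mu> + 1))) n * t^n
       = t ^ n / (fact n * Gamma (real n + (\<mu> + 1) + 1))" for n
  proof -
    have "Gamma (real (Suc n) + \<mu> + 1) = Gamma (real n + (\<mu> + 1) + 1)" by (simp add: algebra_simps)
    then show ?thesis by (simp add: diffs_def del: of_nat_Suc)
  qed
  ultimately show ?thesis by (simp add: bq_def)
qed

lemma bq_pos: assumes "\<mu> \<ge> 0" "t \<ge> 0" shows "bq \<mu> t > 0"
proof -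
  have "0 < (\<Sum>k<1. t ^ k / (fact k * Gamma (real k + \<mu> + 1)))"
    using assms by (simp add: Gamma_real_pos)
  also have "\<dots> \<le> bq \<mu> t" unfolding bq_def
    using assms by (intro sum_le_suminf bq_summable) (auto intro!: divide_nonneg_pos Gamma_real_pos)
  finally show ?thesis .
qed

lemma term_ineq:
  fixes s t :: real and j k :: nat
  assumes "0 \<le> s" "s \<le> t" "\<mu> \<ge> 0"
  shows "(1 / (real k + \<mu> + 1) - 1 / (real j + \<mu> + 1)) * (t^k * s^j - s^k * t^j) \<le> 0"
proof (cases "k \<le> j")
  case True
  then obtain d where d: "j = k + d" using le_Suc_ex by blast
  have "s^d \<le> t^d" using assms by (intro power_mono) auto
  then have "t^k * s^k * s^d \<le> t^k * s^k * t^d" using assms by (intro mult_left_mono) auto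
  then have 1: "t^k * s^j - s^k * t^j \<le> 0" by (simp add: d power_add algebra_simps)
  have 2: "1 / (real k + \<mu> + 1) - 1 / (real j + \<mu> + 1) \<ge> 0"
    using True assms by (auto intro!: divide_left_mono)
  show ?thesis using 1 2 by (simp add: mult_nonneg_nonpos)
next
  case False
  then obtain d where d: "k = j + d" using le_Suc_ex[of j k] by auto
  have "s^d \<le> t^d" using assms by (intro power_mono) auto
  then have "t^j * s^j * s^d \<le> t^j * s^j * t^d" using assms by (intro mult_left_mono) auto
  then have 1: "t^k * s^j - s^k * t^j \<ge> 0" by (simp add: d power_add algebra_simps)
  have 2: "1 / (real k + \<mu> + 1) - 1 / (real j + \<mu> + 1) \<le> 0"
    using False assms by (auto intro!: divide_left_mono)
  show ?thesis using 1 2 by (simp add: mult_nonpos_nonneg)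
qed

lemma bq_ratio:
  assumes "0 \<le> s" "s \<le> t" "\<mu> \<ge> 0"
  shows "bq (\<mu>+1) t * bq \<mu> s \<le> bq (\<mu>+1) s * bq \<mu> t"
proof -
  define b where "b k = 1 / (fact k * Gamma (real k + \<mu> + 1))" for k
  define \<phi> where "\<phi> k = 1 / (real k + \<mu> + 1)" for k
  define a where "a k = b k * \<phi> k" for k
  have ab: "y ^ k / (fact k * Gamma (real k + (\<mu>+1) + 1)) = a k * y ^ k" for y k
  proof -
    have "Gamma (real k + (\<mu>+1) + 1) = (real k + \<mu> + 1) * Gamma (real k + \<mu> + 1)"
      using Gamma_rec[of "real k + \<mu> + 1"] assms by (simp add: algebra_simps)
    then show ?thesis by (simp add: a_def b_def \<phi>_def)
  qed
  have bb: "y ^ k / (fact k * Gamma (real k + \<mu> + 1)) = b k * y ^ k" for y k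
    by (simp add: b_def)
  have sa: "summable (\<lambda>k. a k * y ^ k)" for y
    unfolding ab[symmetric] using bq_summable[of "\<mu>+1" y] assms by simp
  have sb: "summable (\<lambda>k. b k * y ^ k)" for y
    using bq_summable[of "\<mu>" y] assms by (simp add: bb)
  have A: "bq (\<mu>+1) y = (\<Sum>k. a k * y ^ k)" for y unfolding bq_def ab ..
  have B: "bq \<mu> y = (\<Sum>k. b k * y ^ k)" for y unfolding bq_def bb ..
  have bpos: "b k > 0" for k using assms by (simp add: b_def Gamma_real_pos)
  define D where "D N = (\<Sum>k<N. a k * t^k) * (\<Sum>j<N. b j * s^j) - (\<Sum>k<N. a k * s^k) * (\<Sum>j<N. b j * t^j)" for N
  define T where "T k j = a k * b j * (t^k * s^j - s^k * t^j)" for k j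
  have DT: "D N = (\<Sum>k<N. \<Sum>j<N. T k j)" for N
    by (simp add: D_def T_def sum_product sum_subtractf[symmetric] algebra_simps)
  have DT2: "D N = (\<Sum>k<N. \<Sum>j<N. T j k)" for N
    unfolding DT by (rule sum.swap)
  have Tle: "T k j + T j k \<le> 0" for k j
  proof -
    have "T k j + T j k = b j * b k * ((\<phi> k - \<phi> j) * (t^k * s^j - s^k * t^j))"
      by (simp add: T_def a_def algebra_simps)
    also have "\<dots> \<le> 0"
      unfolding \<phi>_def
      by (rule mult_nonneg_nonpos[OF _ term_ineq[OF assms]]) (use bpos[of j] bpos[of k] in simp)
    finally show ?thesis .
  qed
  have Dle: "D N \<le> 0" for N
  proof -
    have "2 * D N = (\<Sum>k<N. \<Sum>j<N. T k j + T j k)"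
    proof -
      have "2 * D N = D N + D N" by simp
      also have "\<dots> = (\<Sum>k<N. \<Sum>j<N. T k j) + (\<Sum>k<N. \<Sum>j<N. T j k)"
        using DT[of N] DT2[of N] by simp
      finally show ?thesis by (simp add: sum.distrib)
    qed
    also have "\<dots> \<le> 0" by (intro sum_nonpos Tle)
    finally show ?thesis by simp
  qed
  have lim: "D \<longlonglongrightarrow> bq (\<mu>+1) t * bq \<mu> s - bq (\<mu>+1) s * bq \<mu> t"
    unfolding D_def[abs_def] A B
    by (intro tendsto_diff tendsto_mult summable_LIMSEQ sa sb)
  have "bq (\<mu>+1) t * bq \<mu> s - bq (\<mu>+1) s * bq \<mu> t \<le> 0"
    using lim Dle by (intro LIMSEQ_le_const2[OF lim]) auto
  then show ?thesis by simp
qed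

lemma besselI_eq:
  assumes "x > 0" "\<nu> \<ge> 0"
  shows "besselI \<nu> x = (x/2) powr \<nu> * bq \<nu> ((x/2)^2)"
proof -
  have h: "(x/2) powr (2 * real k + \<nu>) / (fact k * Gamma (real k + \<nu> + 1))
     = (x/2) powr \<nu> * (((x/2)^2)^k / (fact k * Gamma (real k + \<nu> + 1)))" for k
  proof -
    have "(x/2) powr (2 * real k + \<nu>) = (x/2) powr \<nu> * ((x/2)^2)^k"
    proof -
      have x2: "x/2 > 0" using assms by simp
      have "(x/2) powr (2 * real k + \<nu>) = (x/2) powr (real (2*k)) * (x/2) powr \<nu>"
        by (simp add: powr_add)
      also have "(x/2) powr (real (2*k)) = (x/2) ^ (2*k)" by (rule powr_realpow[OF x2])
      also have "(x/2) ^ (2*k) = ((x/2)^2)^k" by (rule power_mult)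
      finally show ?thesis by simp
    qed
    then show ?thesis by simp
  qed
  have "besselI \<nu> x = (\<Sum>k. (x/2) powr \<nu> * (((x/2)^2)^k / (fact k * Gamma (real k + \<nu> + 1))))"
    by (simp only: besselI_def h)
  also have "\<dots> = (x/2) powr \<nu> * bq \<nu> ((x/2)^2)"
    unfolding bq_def by (rule suminf_mult[OF bq_summable[OF assms(2)]])
  finally show ?thesis .
qed

lemma besselI_deriv:
  assumes "x > 0" "\<nu> \<ge> 0"
  shows "deriv (besselI \<nu>) x = \<nu> * (x/2) powr (\<nu>-1) * (1/2) * bq \<nu> ((x/2)^2)
            + (x/2) powr \<nu> * (bq (\<nu>+1) ((x/2)^2) * (2 * (x/2) * (1/2)))"
proof -
  have d1: "((\<lambda>x. (x/2) powr \<nu>) has_real_derivative \<nu> * (x/2) powr (\<nu>-1) * (1/2)) (at x)"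
  proof -
    have p: "((\<lambda>z. z powr \<nu>) has_real_derivative \<nu> * (x/2) powr (\<nu>-1)) (at (x/2))"
      using has_real_derivative_powr[of "x/2" \<nu>] assms by simp
    have q: "((\<lambda>x. x/2) has_real_derivative 1/2) (at x)" by (auto intro!: derivative_eq_intros)
    from DERIV_chain2[OF p q] show ?thesis by simp
  qed
  have d2: "((\<lambda>x. bq \<nu> ((x/2)^2)) has_real_derivative bq (\<nu>+1) ((x/2)^2) * (2 * (x/2) * (1/2))) (at x)"
    by (rule DERIV_chain2[OF bq_deriv[OF assms(2)]]) (auto intro!: derivative_eq_intros)
  have "((\<lambda>x. (x/2) powr \<nu> * bq \<nu> ((x/2)^2)) has_real_derivative
      \<nu> * (x/2) powr (\<nu>-1) * (1/2) * bq \<nu> ((x/2)^2)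
            + (x/2) powr \<nu> * (bq (\<nu>+1) ((x/2)^2) * (2 * (x/2) * (1/2)))) (at x)"
    by (rule DERIV_cong[OF DERIV_mult[OF d1 d2]]) (simp add: algebra_simps)
  then have "(besselI \<nu> has_real_derivative
      \<nu> * (x/2) powr (\<nu>-1) * (1/2) * bq \<nu> ((x/2)^2)
            + (x/2) powr \<nu> * (bq (\<nu>+1) ((x/2)^2) * (2 * (x/2) * (1/2)))) (at x)"
    by (rule has_field_derivative_transform_within_open[where S="{0<..}"])
       (use assms besselI_eq in auto)
  then show ?thesis by (rule DERIV_imp_deriv)
qed

lemma main_gen:
  fixes r \<nu> :: real
  assumes "r > 0" "\<nu> > 0"
  shows "strict_mono_on {0<..}
     (\<lambda>\<eta>::real. \<eta>\<^sup>2 * deriv (besselI \<nu>) (r / \<eta>) / besselI \<nu> (r / \<eta>))"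
proof -
  define R where "R \<eta> = bq (\<nu>+1) ((r/\<eta>/2)^2) / bq \<nu> ((r/\<eta>/2)^2)" for \<eta>
  have F: "\<eta>\<^sup>2 * deriv (besselI \<nu>) (r / \<eta>) / besselI \<nu> (r / \<eta>) = \<nu> * \<eta>^3 / r + r * \<eta> / 2 * R \<eta>"
    if "\<eta> > 0" for \<eta>
  proof -
    define x where "x = r / \<eta>"
    have x0: "x > 0" using assms that by (simp add: x_def)
    define P where "P = (x/2) powr \<nu>"
    have P0: "P > 0" using x0 by (simp add: P_def)
    have P1: "(x/2) powr (\<nu>-1) = P / (x/2)" using x0 by (simp add: P_def powr_diff)
    have B0: "bq \<nu> ((x/2)^2) > 0" using assms by (intro bq_pos) auto
    have "\<eta>\<^sup>2 * deriv (besselI \<nu>) x / besselI \<nu> x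
       = \<eta>\<^sup>2 * (\<nu> * (P / (x/2)) * (1/2) * bq \<nu> ((x/2)^2)
            + P * (bq (\<nu>+1) ((x/2)^2) * (2 * (x/2) * (1/2)))) / (P * bq \<nu> ((x/2)^2))"
      using besselI_deriv[OF x0] besselI_eq[OF x0] assms P1 by (simp add: P_def)
    also have "\<dots> = \<nu> * \<eta>^3 / r + r * \<eta> / 2 * R \<eta>"
      using P0 B0 x0 that assms unfolding R_def x_def
      by (simp add: field_simps power2_eq_square power3_eq_cube)
    finally show ?thesis by (simp add: x_def)
  qed
  show ?thesis
  proof (rule strict_mono_onI)
    fix a b :: real assume ab: "a \<in> {0<..}" "b \<in> {0<..}" "a < b"
    have 1: "\<nu> * a^3 / r < \<nu> * b^3 / r"
      using ab assms by (intro divide_strict_right_mono mult_strict_left_mono power_strict_mono) auto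
    have Rpos: "R \<eta> \<ge> 0" for \<eta>
    proof -
      have p1: "bq (\<nu>+1) ((r/\<eta>/2)^2) > 0" by (rule bq_pos) (use assms in auto)
      have p2: "bq \<nu> ((r/\<eta>/2)^2) > 0" by (rule bq_pos) (use assms in auto)
      show ?thesis unfolding R_def using p1 p2 by simp
    qed
    have Rmono: "R a \<le> R b"
    proof -
      have s: "(r/b/2)^2 \<le> (r/a/2)^2" using ab assms
        by (intro power_mono divide_right_mono divide_left_mono) auto
      have "bq (\<nu>+1) ((r/a/2)^2) * bq \<nu> ((r/b/2)^2) \<le> bq (\<nu>+1) ((r/b/2)^2) * bq \<nu> ((r/a/2)^2)"
        using s assms by (intro bq_ratio) auto
      moreover have "bq \<nu> ((r/b/2)^2) > 0" "bq \<nu> ((r/a/2)^2) > 0" using assms by (auto intro!: bq_pos)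
      ultimately show ?thesis unfolding R_def by (simp add: divide_simps mult.commute)
    qed
    have 2: "r * a / 2 * R a \<le> r * b / 2 * R b"
      using ab assms Rpos[of a] Rmono by (intro mult_mono) auto
    show "a\<^sup>2 * deriv (besselI \<nu>) (r / a) / besselI \<nu> (r / a) < b\<^sup>2 * deriv (besselI \<nu>) (r / b) / besselI \<nu> (r / b)"
      using F[of a] F[of b] ab 1 2 by simp
  qed
qed

theorem corollary2p2:
  fixes n :: nat and r :: real
  assumes "r > 0"
  shows "strict_mono_on {0<..}
     (\<lambda>\<eta>::real. \<eta>\<^sup>2 * deriv (besselI (real n + 1/2)) (r / \<eta>)
                      / besselI (real n + 1/2) (r / \<eta>))"
  by (rule main_gen[OF assms]) simp

end
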